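(* Fix $\epsilon>0$ and define \[U_1:=\left\{(a,b)\in\bigl([0,1/2)\times[1/2,1)\bigr)\cup\bigl([1/2,1)\times[0,1/2)\bigr):\ a+b<\tfrac34\right\},\] \[U_2:=\left\{(a,b)\in[0,1/2)\times[0,1):\ \tfrac34+\epsilon<a+b<\tfrac54\right\},\] $U:=U_1\cup U_2$ and $S_\epsilon:=\pi(U)\subset\mathbb{T}^2$. Let $\theta_x,\theta_z\in S_\epsilon$ and $\theta_y\in\mathbb{T}^2$ satisfy $2\theta_y=\theta_x+\theta_z$, and write $d:=\frac{\pi^{-1}(\theta_z)-\pi^{-1}(\theta_x)}{2}\in\mathbb{R}^2$. If $|d_1+d_2|\le\epsilon/1000$, then \[(1-\{p(\theta_x)\})^2+(1-\{p(\theta_z)\})^2-2(1-\{p(\theta_y)\})^2\ge 2d_1^2.\]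
   Context: $\mathbb{T}^2:=(\mathbb{R}/\mathbb{Z})^2$. $\pi:\mathbb{R}^2\to\mathbb{T}^2$, $x\mapsto x+\mathbb{Z}^2$, and for $\theta\in\mathbb{T}^2$, $\pi^{-1}(\theta)$ denotes the unique $x\in[0,1)^2$ with $\pi(x)=\theta$. The projection $p:\mathbb{T}^2\to[0,1)$ is $p(\theta)=\pi^{-1}(\theta)_1$. For $x\in[0,1)$, $\{x\}:=x$ if $x\in[0,1/2)$ and $\{x\}:=x-1/2$ otherwise (this is not the usual fractional part). *)

theory Defs
  imports Complex_Main
begin

text \<open>The torus T^2 = (R/Z)^2 is modelled by its fundamental domain [0,1)^2:
  a point of the torus is identified with its unique representative in [0,1)^2.
  Under this model pi^{-1} is the identity on representatives.\<close>

definition T2 :: "(real \<times> real) set" where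
  "T2 = {0..<1} \<times> {0..<1}"

definition tpi :: "real \<times> real \<Rightarrow> real \<times> real" where
  "tpi x = (frac (fst x), frac (snd x))"

definition tinv :: "real \<times> real \<Rightarrow> real \<times> real" where
  "tinv \<theta> = \<theta>"

definition tadd :: "real \<times> real \<Rightarrow> real \<times> real \<Rightarrow> real \<times> real" where
  "tadd \<theta> \<eta> = tpi (fst \<theta> + fst \<eta>, snd \<theta> + snd \<eta>)"

definition tp :: "real \<times> real \<Rightarrow> real" where
  "tp \<theta> = fst (tinv \<theta>)"

definition brace :: "real \<Rightarrow> real" where
  "brace x = (if x < 1/2 then x else x - 1/2)"

definition U1 :: "(real \<times> real) set" where
  "U1 = {(a,b). (a,b) \<in> ({0..<1/2} \<times> {1/2..<1}) \<union> ({1/2..<1} \<times> {0..<1/2}) \<and> a + b < 3/4}"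

definition U2 :: "real \<Rightarrow> (real \<times> real) set" where
  "U2 \<epsilon> = {(a,b). (a,b) \<in> {0..<1/2} \<times> {0..<1} \<and> 3/4 + \<epsilon> < a + b \<and> a + b < 5/4}"

definition Seps :: "real \<Rightarrow> (real \<times> real) set" where
  "Seps \<epsilon> = tpi ` (U1 \<union> U2 \<epsilon>)"

end

theory Submission
  imports Defs
begin

lemma tpi_id: "u \<in> T2 \<Longrightarrow> tpi u = u"
  by (cases u) (auto simp: tpi_def T2_def frac_eq)

lemma Seps_mem: "\<theta> \<in> Seps e \<Longrightarrow> \<theta> \<in> U1 \<union> U2 e"
proof -
  assume "\<theta> \<in> Seps e"
  then obtain u where u: "u \<in> U1 \<union> U2 e" "\<theta> = tpi u" by (auto simp: Seps_def)
  have "u \<in> T2" using u(1) by (cases u) (auto simp: U1_def U2_def T2_def)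
  then show ?thesis using u tpi_id by simp
qed

lemma frac_eq_int:
  assumes "frac (a::real) = frac b"
  shows "\<exists>k::int. a = b + of_int k"
proof -
  have "a - of_int \<lfloor>a\<rfloor> = b - of_int \<lfloor>b\<rfloor>" using assms by (simp add: frac_def)
  then have "a = b + of_int (\<lfloor>a\<rfloor> - \<lfloor>b\<rfloor>)" by simp
  then show ?thesis by blast
qed

lemma L1: "(1 - (a::real))^2 + (1 - c)^2 - 2 * (1 - (a + c)/2)^2 \<ge> 2 * ((c - a)/2)^2"
proof -
  have "(1 - (a::real))^2 + (1 - c)^2 - 2 * (1 - (a + c)/2)^2 = 2 * ((c - a)/2)^2"
    by (simp add: power2_eq_square field_simps)
  then show ?thesis by simp
qed
lemma L2: "(c::real) < 1/4 \<Longrightarrow> (1 - a)^2 + (1 - c)^2 - 2 * (1 - ((a + c)/2 + 1/4))^2 \<ge> 2 * ((1/2 + c - a)/2)^2"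
proof -
  assume "c < 1/4"
  have "(1 - a)^2 + (1 - c)^2 - 2 * (1 - ((a + c)/2 + 1/4))^2 - 2 * ((1/2 + c - a)/2)^2 = 3/4 - c"
    by (simp add: power2_eq_square field_simps)
  then show ?thesis using \<open>c < 1/4\<close> by linarith
qed

lemma main_ineq:
  fixes e x1 x2 z1 z2 y1 :: real and k :: int
  assumes e: "e > 0"
    and x: "(x1,x2) \<in> U1 \<union> U2 e" and z: "(z1,z2) \<in> U1 \<union> U2 e"
    and y: "0 \<le> y1" "y1 < 1"
    and k: "2*y1 = x1 + z1 + of_int k"
    and d: "\<bar>(z1 - x1)/2 + (z2 - x2)/2\<bar> \<le> e/1000"
  shows "(1 - brace x1)^2 + (1 - brace z1)^2 - 2 * (1 - brace y1)^2 \<ge> 2 * ((z1 - x1)/2)^2"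
proof -
  have xb: "0 \<le> x1" "x1 < 1" "0 \<le> z1" "z1 < 1" using x z by (auto simp: U1_def U2_def)
  have "k \<in> {-1,0,1}"
  proof -
    have "of_int k > (-2::real)" "of_int k < (2::real)" using k xb y by linarith+
    then have "k > -2" "k < 2" by linarith+
    then show ?thesis by auto
  qed
  then have "k = -1 \<or> k = 0 \<or> k = 1" by simp
  then have "of_int k = (-1::real) \<or> of_int k = (0::real) \<or> of_int k = (1::real)" by auto
  then have ky: "y1 = (x1 + z1 - 1)/2 \<or> y1 = (x1+z1)/2 \<or> y1 = (x1+z1+1)/2" using k by (elim disjE) (auto simp: field_simps)
  have cases: "(x1 < 1/2 \<and> z1 < 1/2) \<or> (x1 \<ge> 1/2 \<and> z1 \<ge> 1/2) \<or>
      (x1 < 1/2 \<and> z1 \<ge> 1/2 \<and> x1 < 1/4 \<and> z1 < 3/4) \<or> (z1 < 1/2 \<and> x1 \<ge> 1/2 \<and> z1 < 1/4 \<and> x1 < 3/4)"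
  proof -
    have d2: "(z1 + z2) - (x1 + x2) \<le> e/500" "(x1 + x2) - (z1 + z2) \<le> e/500"
    proof -
      have "- (e/1000) \<le> (z1 - x1)/2 + (z2 - x2)/2" "(z1 - x1)/2 + (z2 - x2)/2 \<le> e/1000"
        using abs_le_iff[THEN iffD1, OF d] by linarith+
      then show "(z1 + z2) - (x1 + x2) \<le> e/500" by (simp add: field_simps)
      from \<open>- (e/1000) \<le> (z1 - x1)/2 + (z2 - x2)/2\<close> show "(x1 + x2) - (z1 + z2) \<le> e/500" by (simp add: field_simps)
    qed
    have xc: "(x1 < 1/2 \<and> x2 \<ge> 1/2 \<and> x1 + x2 < 3/4) \<or> (x1 \<ge> 1/2 \<and> 0 \<le> x2 \<and> x1 + x2 < 3/4) \<or> (x1 < 1/2 \<and> 3/4 + e < x1 + x2)"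
      using x unfolding U1_def U2_def by auto
    have zc: "(z1 < 1/2 \<and> z2 \<ge> 1/2 \<and> z1 + z2 < 3/4) \<or> (z1 \<ge> 1/2 \<and> 0 \<le> z2 \<and> z1 + z2 < 3/4) \<or> (z1 < 1/2 \<and> 3/4 + e < z1 + z2)"
      using z unfolding U1_def U2_def by auto
    show ?thesis using xc zc d2 e xb by argo
  qed
  consider "x1 < 1/2" "z1 < 1/2" | "x1 \<ge> 1/2" "z1 \<ge> 1/2"
    | "x1 < 1/4" "z1 \<ge> 1/2" "z1 < 3/4" | "z1 < 1/4" "x1 \<ge> 1/2" "x1 < 3/4"
    using cases by linarith
  then show ?thesis
  proof cases
    case 1
    have bx: "brace x1 = x1" "brace z1 = z1" using 1 by (simp_all add: brace_def)
    have by': "brace y1 = (x1+z1)/2" using 1 ky y xb by (auto simp: brace_def)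
    show ?thesis unfolding bx by' using L1[of z1 x1] by linarith
  next
    case 2
    have bx: "brace x1 = x1 - 1/2" "brace z1 = z1 - 1/2" using 2 by (simp_all add: brace_def)
    have by': "brace y1 = ((x1 - 1/2)+(z1 - 1/2))/2" using 2 ky y xb by (auto simp: brace_def)
    have sq: "((z1 - x1)/2)^2 = (((z1 - 1/2) - (x1 - 1/2))/2)^2" by simp
    show ?thesis unfolding bx by' using L1[of "z1 - 1/2" "x1 - 1/2"] sq by linarith
  next
    case 3
    have bx: "brace x1 = x1" "brace z1 = z1 - 1/2" using 3 by (simp_all add: brace_def)
    have by': "brace y1 = (x1+(z1 - 1/2))/2 + 1/4" using 3 ky y xb by (auto simp: brace_def field_simps)
    have sq: "((z1 - x1)/2)^2 = ((1/2 + (z1 - 1/2) - x1)/2)^2" by simp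
    have c: "z1 - 1/2 < 1/4" using 3 by simp
    show ?thesis unfolding bx by' using L2[of "z1 - 1/2" x1, OF c] sq by linarith
  next
    case 4
    have bx: "brace x1 = x1 - 1/2" "brace z1 = z1" using 4 by (simp_all add: brace_def)
    have by': "brace y1 = (z1 + (x1 - 1/2))/2 + 1/4" using 4 ky y xb by (auto simp: brace_def field_simps)
    have sq: "((z1 - x1)/2)^2 = ((1/2 + (x1 - 1/2) - z1)/2)^2" by (simp add: power2_eq_square algebra_simps)
    have c: "x1 - 1/2 < 1/4" using 4 by simp
    show ?thesis unfolding bx by' using L2[of "x1 - 1/2" z1, OF c] sq by linarith
  qed
qed

theorem proposition4p4:
  fixes \<epsilon> :: real and \<theta>x \<theta>y \<theta>z :: "real \<times> real"
  assumes "\<epsilon> > 0"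
    and "\<theta>x \<in> Seps \<epsilon>" and "\<theta>z \<in> Seps \<epsilon>" and "\<theta>y \<in> T2"
    and "tadd \<theta>y \<theta>y = tadd \<theta>x \<theta>z"
    and "\<bar>(fst (tinv \<theta>z) - fst (tinv \<theta>x)) / 2 + (snd (tinv \<theta>z) - snd (tinv \<theta>x)) / 2\<bar> \<le> \<epsilon> / 1000"
  shows "(1 - brace (tp \<theta>x))^2 + (1 - brace (tp \<theta>z))^2 - 2 * (1 - brace (tp \<theta>y))^2
           \<ge> 2 * ((fst (tinv \<theta>z) - fst (tinv \<theta>x)) / 2)^2"
proof -
  obtain x1 x2 where X: "\<theta>x = (x1,x2)" by (cases \<theta>x)
  obtain z1 z2 where Z: "\<theta>z = (z1,z2)" by (cases \<theta>z)
  obtain y1 y2 where Y: "\<theta>y = (y1,y2)" by (cases \<theta>y)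
  have x: "(x1,x2) \<in> U1 \<union> U2 \<epsilon>" using Seps_mem assms(2) X by simp
  have z: "(z1,z2) \<in> U1 \<union> U2 \<epsilon>" using Seps_mem assms(3) Z by simp
  have y: "0 \<le> y1" "y1 < 1" using assms(4) Y by (auto simp: T2_def)
  have "frac (y1 + y1) = frac (x1 + z1)" using assms(5) X Y Z by (simp add: tadd_def tpi_def)
  then obtain k :: int where "y1 + y1 = x1 + z1 + of_int k" using frac_eq_int by blast
  then have k: "2*y1 = x1 + z1 + of_int k" by simp
  have d: "\<bar>(z1 - x1)/2 + (z2 - x2)/2\<bar> \<le> \<epsilon>/1000" using assms(6) X Z by (simp add: tinv_def)
  show ?thesis using main_ineq[OF assms(1) x z y k d] X Y Z by (simp add: tp_def tinv_def)
qed

end
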